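(* Let $w=i_n\cdots i_1$ be a reverse lattice word and $\sigma=\mathrm{std}(w)$. Then $T_w=P(\sigma^{-1})$.
   Context: A word $w=i_n\cdots i_1$ of positive integers is reverse lattice if in every suffix $i_k\cdots i_1$ the number of $j$'s is at least the number of $(j+1)$'s for every $j\geq1$. $\mathrm{std}(w)$: replace the letters of $w$ (read left to right) by $1,\ldots,n$, smaller letters first, equal letters increasing from left to right; a permutation in one-line notation. Partitions in French convention (rows numbered bottom to top). With $\lambda_0=\varnothing$ and $\lambda_k$ obtained from $\lambda_{k-1}$ by adding a box at the addable node in column $i_k$, $T_w$ is the tableau of shape $\lambda_n$ whose box in $\lambda_k\setminus\lambda_{k-1}$ contains $n-k+1$. $P(\pi)$ is the insertion tableau of the variant Robinson–Schensted algorithm: insert $\pi(1),\ldots,\pi(n)$ successively starting at the bottom row; if $y$ exceeds some entry of the current row, $y$ replaces the greatest entry $x<y$ of that row and $x$ is inserted into the next row up; otherwise $y$ is appended at the end of the row. *)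

theory Defs
  imports Main
begin

text \<open>Words: a word w = i_n ... i_1 is the list [i_n, ..., i_1] (leftmost letter first).
  The suffix i_k ... i_1 is drop (n - k) w, and i_k = w ! (n - k).\<close>

definition reverse_lattice :: "nat list \<Rightarrow> bool" where
  "reverse_lattice w \<longleftrightarrow>
     (\<forall>k \<le> length w. \<forall>j \<ge> 1.
        count_list (drop (length w - k) w) (Suc j) \<le> count_list (drop (length w - k) w) j)"

definition std :: "nat list \<Rightarrow> nat list" where
  "std w = map (\<lambda>p. Suc (card {q. q < length w \<and>
                 (w ! q < w ! p \<or> (w ! q = w ! p \<and> q < p))})) [0..<length w]"

definition perm_inv :: "nat list \<Rightarrow> nat list" where
  "perm_inv s = map (\<lambda>j. Suc (THE p. p < length s \<and> s ! p = j)) [1..<Suc (length s)]"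

text \<open>Tableaux: list of rows, numbered bottom to top (French convention);
  each row lists its entries in columns 1, 2, ... .\<close>
type_synonym tableau = "nat list list"

definition col_height :: "tableau \<Rightarrow> nat \<Rightarrow> nat" where
  "col_height T c = length (filter (\<lambda>row. c \<le> length row) T)"

definition add_in_col :: "nat \<Rightarrow> nat \<Rightarrow> tableau \<Rightarrow> tableau" where
  "add_in_col c v T =
     (let h = col_height T c in
      if h < length T then T[h := T ! h @ [v]] else T @ [[v]])"

definition T_of_word :: "nat list \<Rightarrow> tableau" where
  "T_of_word w =
     foldl (\<lambda>T k. add_in_col (w ! (length w - k)) (length w - k + 1) T) [] [1..<Suc (length w)]"

text \<open>Variant Robinson--Schensted row insertion, starting at the bottom row.\<close>
fun rs_insert :: "nat \<Rightarrow> tableau \<Rightarrow> tableau" where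
  "rs_insert y [] = [[y]]"
| "rs_insert y (row # rows) =
     (if \<exists>x \<in> set row. x < y
      then (let x = Max {x \<in> set row. x < y}
            in map (\<lambda>z. if z = x then y else z) row # rs_insert x rows)
      else (row @ [y]) # rows)"

definition P_tab :: "nat list \<Rightarrow> tableau" where
  "P_tab \<pi> = foldl (\<lambda>T y. rs_insert y T) [] \<pi>"

end

theory Submission
  imports Defs
begin


fun addcol :: "tableau \<Rightarrow> nat list \<Rightarrow> tableau" where
  "addcol Rs [] = Rs"
| "addcol [] (z#zs) = [z] # addcol [] zs"
| "addcol (R#Rs) (z#zs) = (R@[z]) # addcol Rs zs"

lemma rs_insert_col:
  "\<forall>z\<in>set zs. z < y \<Longrightarrow> sorted_wrt (>) zs \<Longrightarrow> rs_insert y (addcol [] zs) = [y] # addcol [] zs"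
proof (induction zs arbitrary: y)
  case Nil then show ?case by simp
next
  case (Cons z zs)
  have "rs_insert z (addcol [] zs) = [z] # addcol [] zs"
    using Cons by auto
  moreover have "{x \<in> set [z]. x < y} = {z}" using Cons by auto
  ultimately show ?case using Cons by simp
qed

lemma rs_insert_addcol:
  assumes "sorted_wrt (>) (y#zs)"
    and "\<forall>i<length (y#zs). i < length Rs \<longrightarrow> (\<forall>x\<in>set (Rs!i). (y#zs)!i < x)"
  shows "rs_insert y (addcol Rs zs) = addcol Rs (y#zs)"
  using assms
proof (induction Rs arbitrary: y zs)
  case Nil
  then show ?case using rs_insert_col by simp
next
  case (Cons R Rs)
  show ?case
  proof (cases zs)
    case Nil
    have "\<forall>x\<in>set R. y < x" using Cons.prems(2) by force
    then have "\<not> (\<exists>x\<in>set R. x < y)" by auto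
    then show ?thesis using Nil by simp
  next
    case (Cons z zs')
    have R: "\<forall>x\<in>set R. y < x" using Cons.prems(2) by force
    have zy: "z < y" using Cons.prems(1) Cons by simp
    have s: "{x \<in> set (R@[z]). x < y} = {z}" using R zy by auto
    have m: "map (\<lambda>x. if x = z then y else x) (R@[z]) = R@[y]"
      using R zy by (induction R) auto
    have ih: "rs_insert z (addcol Rs zs') = addcol Rs (z#zs')"
    proof (rule Cons.IH)
      show "sorted_wrt (>) (z#zs')" using Cons.prems(1) \<open>zs = z#zs'\<close> by simp
      show "\<forall>i<length (z#zs'). i < length Rs \<longrightarrow> (\<forall>x\<in>set (Rs!i). (z#zs')!i < x)"
      proof (intro allI impI ballI)
        fix i x assume "i < length (z#zs')" "i < length Rs" "x \<in> set (Rs!i)"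
        then show "(z#zs')!i < x" using Cons.prems(2) \<open>zs = z#zs'\<close>
          by (metis Suc_less_eq length_Cons nth_Cons_Suc)
      qed
    qed
    show ?thesis using Cons s m ih zy by auto
  qed
qed

lemma foldl_rs_insert:
  assumes "sorted_wrt (>) (rev ys @ zs)"
    and "\<forall>i<length (rev ys @ zs). i < length Rs \<longrightarrow> (\<forall>x\<in>set (Rs!i). (rev ys @ zs)!i < x)"
  shows "foldl (\<lambda>T y. rs_insert y T) (addcol Rs zs) ys = addcol Rs (rev ys @ zs)"
  using assms
proof (induction ys arbitrary: zs)
  case Nil then show ?case by simp
next
  case (Cons y ys)
  let ?c = "rev ys @ y # zs"
  have c: "rev (y#ys) @ zs = ?c" by simp
  have st: "rs_insert y (addcol Rs zs) = addcol Rs (y#zs)"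
  proof (rule rs_insert_addcol)
    show "sorted_wrt (>) (y#zs)" using Cons.prems(1) c by (simp add: sorted_wrt_append)
    show "\<forall>i<length (y#zs). i < length Rs \<longrightarrow> (\<forall>x\<in>set (Rs!i). (y#zs)!i < x)"
    proof (intro allI impI ballI)
      fix i x assume i: "i < length (y#zs)" "i < length Rs" "x \<in> set (Rs!i)"
      have e: "(y#zs)!i = ?c ! (length ys + i)" by (simp add: nth_append)
      have "?c ! (length ys + i) \<le> ?c ! i"
      proof (cases "length ys = 0")
        case True then show ?thesis by simp
      next
        case False
        then show ?thesis using sorted_wrt_nth_less[of "(>)" ?c i "length ys + i"] Cons.prems(1) c i(1)
          by simp
      qed
      moreover have "?c ! i < x" using Cons.prems(2) c i by simp
      ultimately show "(y#zs)!i < x" using e by simp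
    qed
  qed
  show ?case using Cons.IH[of "y#zs"] Cons.prems st c by simp
qed

definition rowf :: "nat list list \<Rightarrow> nat \<Rightarrow> nat list" where
  "rowf cols i = map (\<lambda>c. c!i) (filter (\<lambda>c. i < length c) cols)"
definition hgt :: "nat list list \<Rightarrow> nat" where
  "hgt cols = foldr (\<lambda>c m. max (length c) m) cols 0"
definition tab :: "nat list list \<Rightarrow> tableau" where
  "tab cols = map (rowf cols) [0..<hgt cols]"

lemma hgt_append[simp]: "hgt (xs @ ys) = max (hgt xs) (hgt ys)"
  by (induction xs) (auto simp: hgt_def)
lemma hgt_Cons[simp]: "hgt (x # ys) = max (length x) (hgt ys)"
  by (simp add: hgt_def)
lemma hgt_Nil[simp]: "hgt [] = 0" by (simp add: hgt_def)
lemma hgt_ge: "c \<in> set xs \<Longrightarrow> length c \<le> hgt xs"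
  by (induction xs) auto
lemma hgt_le: "\<forall>c\<in>set xs. length c \<le> h \<Longrightarrow> hgt xs \<le> h"
  by (induction xs) auto
lemma rowf_big: "hgt xs \<le> i \<Longrightarrow> rowf xs i = []"
  unfolding rowf_def using hgt_ge by (fastforce simp: filter_empty_conv)
lemma rowf_append[simp]: "rowf (xs @ ys) i = rowf xs i @ rowf ys i"
  by (simp add: rowf_def)
lemma rowf_Cons[simp]: "rowf (x # ys) i = (if i < length x then [x!i] else []) @ rowf ys i"
  by (simp add: rowf_def)

lemma addcol_length[simp]: "length (addcol R zs) = max (length R) (length zs)"
  by (induction R zs rule: addcol.induct) auto
lemma addcol_nth: "i < length (addcol R zs) \<Longrightarrow>
   addcol R zs ! i = (if i < length R then R!i else []) @ (if i < length zs then [zs!i] else [])"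
  by (induction R zs arbitrary: i rule: addcol.induct) (auto simp: nth_Cons split: nat.split)

lemma addcol_tab: "addcol (tab xs) col = tab (xs @ [col])"
proof (rule nth_equalityI)
  show "length (addcol (tab xs) col) = length (tab (xs @ [col]))"
    by (simp add: tab_def)
  fix i assume "i < length (addcol (tab xs) col)"
  then show "addcol (tab xs) col ! i = tab (xs @ [col]) ! i"
    by (auto simp: addcol_nth tab_def rowf_big)
qed

definition Cond :: "nat list list \<Rightarrow> bool" where
  "Cond cols \<longleftrightarrow> (\<forall>c\<in>set cols. sorted_wrt (>) c) \<and>
     sorted_wrt (\<lambda>a b. \<forall>i. i < length a \<longrightarrow> i < length b \<longrightarrow> b!i < a!i) cols"

lemma P_side: "Cond cols \<Longrightarrow> foldl (\<lambda>T y. rs_insert y T) [] (concat (map rev cols)) = tab cols"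
proof (induction cols rule: rev_induct)
  case Nil then show ?case by (simp add: tab_def)
next
  case (snoc col xs)
  have cx: "Cond xs" using snoc.prems by (simp add: Cond_def sorted_wrt_append)
  have sc: "sorted_wrt (>) col" using snoc.prems by (simp add: Cond_def)
  have cr: "\<forall>a\<in>set xs. \<forall>i. i < length a \<longrightarrow> i < length col \<longrightarrow> col!i < a!i"
    using snoc.prems by (simp add: Cond_def sorted_wrt_append)
  have "foldl (\<lambda>T y. rs_insert y T) (addcol (tab xs) []) (rev col) = addcol (tab xs) (rev (rev col) @ [])"
  proof (rule foldl_rs_insert)
    show "sorted_wrt (>) (rev (rev col) @ [])" using sc by simp
    show "\<forall>i<length (rev (rev col) @ []). i < length (tab xs) \<longrightarrow> (\<forall>x\<in>set (tab xs!i). (rev (rev col) @ [])!i < x)"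
      using cr by (auto simp: tab_def rowf_def)
  qed
  then show ?case using snoc.IH[OF cx] addcol_tab by simp
qed




lemma col_height_tab_aux:
  assumes cols: "cols = A @ C # B"
    and Bs: "\<forall>x\<in>set B. length x \<le> length C"
    and As: "\<forall>x\<in>set A. length C < length x"
  shows "col_height (tab cols) (Suc (length A)) = length C"
proof -
  have rowf_len: "Suc (length A) \<le> length (rowf cols i) \<longleftrightarrow> i < length C" for i
  proof
    assume "i < length C"
    then have "rowf A i = map (\<lambda>c. c!i) A" using As unfolding rowf_def
      by (metis (mono_tags, lifting) dual_order.strict_trans filter_True)
    then show "Suc (length A) \<le> length (rowf cols i)" using \<open>i < length C\<close> cols by simp
  next
    assume h: "Suc (length A) \<le> length (rowf cols i)"
    show "i < length C"
    proof (rule ccontr)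
      assume "\<not> i < length C"
      then have "rowf B i = []" using Bs unfolding rowf_def by (fastforce simp: filter_empty_conv)
      moreover have "length (rowf A i) \<le> length A" by (simp add: rowf_def)
      ultimately show False using h cols \<open>\<not> i < length C\<close> by simp
    qed
  qed
  have hC: "length C \<le> hgt cols" using hgt_ge cols by simp
  have "col_height (tab cols) (Suc (length A)) = length (filter (\<lambda>i. Suc (length A) \<le> length (rowf cols i)) [0..<hgt cols])"
    by (simp add: col_height_def tab_def filter_map o_def)
  also have "\<dots> = card {i. i < hgt cols \<and> i < length C}"
    by (auto simp: length_filter_conv_card rowf_len intro!: arg_cong[where f=card])
  also have "{i. i < hgt cols \<and> i < length C} = {..<length C}" using hC by auto
  finally show ?thesis by simp
qed

lemma add_in_col_tab:
  assumes k: "k < length cols"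
    and srt: "sorted_wrt (\<lambda>x y. length y \<le> length x) cols"
    and lt: "\<forall>j<k. length (cols!k) < length (cols!j)"
  shows "add_in_col (Suc k) v (tab cols) = tab (cols[k := cols!k @ [v]])"
proof -
  define A where "A = take k cols"
  define C where "C = cols!k"
  define B where "B = drop (Suc k) cols"
  have cols: "cols = A @ C # B" using k by (simp add: A_def B_def C_def id_take_nth_drop)
  have cols': "cols[k := cols!k @ [v]] = A @ (C@[v]) # B"
    using k by (simp add: A_def B_def C_def upd_conv_take_nth_drop)
  have lA: "length A = k" using k by (simp add: A_def)
  have Bs: "\<forall>x\<in>set B. length x \<le> length C" using srt cols by (simp add: sorted_wrt_append)
  have As: "\<forall>x\<in>set A. length C < length x" using lt lA unfolding A_def C_def
    by (auto simp: in_set_conv_nth)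
  let ?h = "length C"
  have ch: "col_height (tab cols) (Suc k) = ?h"
    using col_height_tab_aux[OF cols Bs As] lA by simp
  have hB: "hgt B \<le> ?h" using Bs hgt_le by blast
  have rB: "rowf B i = []" if "?h \<le> i" for i using rowf_big[of B i] hB that by simp
  have H: "hgt cols = max (hgt A) ?h" using cols hB by simp
  have H': "hgt (A @ (C@[v]) # B) = max (hgt A) (Suc ?h)" using hB by simp
  have rowne: "rowf (A @ (C@[v]) # B) i = rowf cols i" if "i \<noteq> ?h" for i
    using that cols by (auto simp: nth_append rB)
  show ?thesis
  proof (cases "?h < length (tab cols)")
    case True
    then have hA: "?h < hgt A" using H by (simp add: tab_def)
    have "add_in_col (Suc k) v (tab cols) = (tab cols)[?h := tab cols ! ?h @ [v]]"
      using True ch by (simp add: add_in_col_def Let_def)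
    also have "\<dots> = tab (A @ (C@[v]) # B)"
    proof (rule nth_equalityI)
      show "length ((tab cols)[?h := tab cols ! ?h @ [v]]) = length (tab (A @ (C@[v]) # B))"
        using H H' hA by (simp add: tab_def)
      fix i assume i: "i < length ((tab cols)[?h := tab cols ! ?h @ [v]])"
      then have iH: "i < hgt cols" by (simp add: tab_def)
      show "(tab cols)[?h := tab cols ! ?h @ [v]] ! i = tab (A @ (C@[v]) # B) ! i"
      proof (cases "i = ?h")
        case True
        then show ?thesis using iH H H' hA cols rB by (simp add: tab_def nth_list_update)
      next
        case False
        then show ?thesis using iH H H' hA rowne by (simp add: tab_def nth_list_update)
      qed
    qed
    finally show ?thesis using cols' by simp
  next
    case False
    then have hA: "hgt A \<le> ?h" and Hh: "hgt cols = ?h" using H by (auto simp: tab_def)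
    have rA: "rowf A ?h = []" using rowf_big hA by simp
    have "add_in_col (Suc k) v (tab cols) = tab cols @ [[v]]"
      using False ch by (simp add: add_in_col_def Let_def)
    also have "\<dots> = tab (A @ (C@[v]) # B)"
    proof (rule nth_equalityI)
      show "length (tab cols @ [[v]]) = length (tab (A @ (C@[v]) # B))"
        using H' hA Hh by (simp add: tab_def)
      fix i assume i: "i < length (tab cols @ [[v]])"
      then have iH: "i \<le> ?h" using Hh by (simp add: tab_def)
      show "(tab cols @ [[v]]) ! i = tab (A @ (C@[v]) # B) ! i"
      proof (cases "i = ?h")
        case True
        then show ?thesis using H' hA Hh rA rB by (simp add: tab_def nth_append)
      next
        case False
        then have "i < ?h" using iH by simp
        have "tab (A @ (C@[v]) # B) ! i = rowf (A @ (C@[v]) # B) i" using \<open>i < ?h\<close> H' hA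
          by (simp add: tab_def nth_append del: rowf_Cons rowf_append upt_Suc)
        also have "\<dots> = rowf cols i" using rowne[OF False] .
        finally show ?thesis using \<open>i < ?h\<close> Hh by (simp add: tab_def nth_append)
      qed
    qed
    finally show ?thesis using cols' by simp
  qed
qed




fun Tw :: "nat \<Rightarrow> nat list \<Rightarrow> tableau" where
  "Tw d [] = []"
| "Tw d (a#u) = add_in_col a d (Tw (Suc d) u)"

lemma T_of_word_Tw_aux:
  "m \<le> length w \<Longrightarrow>
   foldl (\<lambda>T k. add_in_col (w ! (length w - k)) (length w - k + 1) T) [] [1..<Suc m]
   = Tw (length w - m + 1) (drop (length w - m) w)"
proof (induction m)
  case 0 then show ?case by simp
next
  case (Suc m)
  have d: "drop (length w - Suc m) w = w ! (length w - Suc m) # drop (length w - m) w"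
  proof -
    have "Suc (length w - Suc m) = length w - m" using Suc.prems by simp
    moreover have "length w - Suc m < length w" using Suc.prems by simp
    ultimately show ?thesis using Cons_nth_drop_Suc[of "length w - Suc m" w] by simp
  qed
  have e: "Suc (length w - Suc m + 1) = length w - m + 1" using Suc.prems by simp
  show ?case using Suc d e by simp
qed

lemma T_of_word_Tw: "T_of_word w = Tw 1 w"
  using T_of_word_Tw_aux[of "length w" w] by (simp add: T_of_word_def)

definition colW :: "nat \<Rightarrow> nat list \<Rightarrow> nat \<Rightarrow> nat list" where
  "colW d u c = rev (map (\<lambda>p. p + d) (filter (\<lambda>p. u!p = c) [0..<length u]))"

definition colsW :: "nat \<Rightarrow> nat \<Rightarrow> nat list \<Rightarrow> nat list list" where
  "colsW M d u = map (colW d u) [1..<Suc M]"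

lemma colW_Nil[simp]: "colW d [] c = []" by (simp add: colW_def)

lemma colW_Cons: "colW d (a#u) c = colW (Suc d) u c @ (if a = c then [d] else [])"
proof -
  have "[0..<length (a#u)] = 0 # map Suc [0..<length u]"
    by (simp add: upt_conv_Cons map_Suc_upt del: upt_Suc)
  then show ?thesis by (simp add: colW_def filter_map o_def)
qed

lemma colW_length: "length (colW d u c) = count_list u c"
  by (induction u arbitrary: d) (auto simp: colW_Cons)

definition RL :: "nat list \<Rightarrow> bool" where
  "RL u \<longleftrightarrow> (\<forall>k\<le>length u. \<forall>j\<ge>1. count_list (drop k u) (Suc j) \<le> count_list (drop k u) j)"

lemma RL_Cons: assumes "RL (a#u)" shows "RL u"
  unfolding RL_def
proof (intro allI impI)
  fix k j :: nat assume k: "k \<le> length u" and j: "1 \<le> j"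
  have "Suc k \<le> length (a#u)" using k by simp
  then have "count_list (drop (Suc k) (a#u)) (Suc j) \<le> count_list (drop (Suc k) (a#u)) j"
    using assms j unfolding RL_def by blast
  then show "count_list (drop k u) (Suc j) \<le> count_list (drop k u) j" by simp
qed

lemma RL_anti: assumes r: "RL u" "1 \<le> c" "c \<le> c'" shows "count_list u c' \<le> count_list u c"
proof -
  have m: "count_list u (Suc (Suc n)) \<le> count_list u (Suc n)" for n
  proof -
    have "(0::nat) \<le> length u" "1 \<le> Suc n" by simp_all
    then have "count_list (drop 0 u) (Suc (Suc n)) \<le> count_list (drop 0 u) (Suc n)"
      using r(1) unfolding RL_def by blast
    then show ?thesis by simp
  qed
  have "count_list u (Suc (c' - 1)) \<le> count_list u (Suc (c - 1))"
    by (rule lift_Suc_antimono_le[of "\<lambda>n. count_list u (Suc n)"]) (use m r in auto)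
  moreover have "Suc (c' - 1) = c'" "Suc (c - 1) = c" using r by auto
  ultimately show ?thesis by simp
qed

lemma T_side:
  "\<forall>a\<in>set u. 1 \<le> a \<and> a \<le> M \<Longrightarrow> RL u \<Longrightarrow> Tw d u = tab (colsW M d u)"
proof (induction u arbitrary: d)
  case Nil
  have "hgt (colsW M d []) = 0" by (rule order_antisym, rule hgt_le) (auto simp: colsW_def)
  then show ?case by (simp add: tab_def)
next
  case (Cons a u)
  let ?cols = "colsW M (Suc d) u"
  have ru: "RL u" using RL_Cons Cons.prems by blast
  have ih: "Tw (Suc d) u = tab ?cols" using Cons ru by simp
  have a: "1 \<le> a" "a \<le> M" using Cons.prems by auto
  have len: "length (?cols ! j) = count_list u (Suc j)" if "j < M" for j
    using that by (simp add: colsW_def colW_length del: upt_Suc)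
  have r: "?cols ! j = colW (Suc d) u (Suc j)" if "j < M" for j
    using that by (simp add: colsW_def del: upt_Suc)
  have upd: "colsW M d (a#u) = ?cols[a - 1 := ?cols ! (a - 1) @ [d]]"
  proof (rule nth_equalityI)
    show "length (colsW M d (a#u)) = length (?cols[a - 1 := ?cols ! (a - 1) @ [d]])"
      by (simp add: colsW_def)
    fix i assume "i < length (colsW M d (a#u))"
    then have i: "i < M" by (simp add: colsW_def del: upt_Suc)
    have l: "colsW M d (a#u) ! i = colW d (a#u) (Suc i)" using i by (simp add: colsW_def del: upt_Suc)
    show "colsW M d (a#u) ! i = ?cols[a - 1 := ?cols ! (a - 1) @ [d]] ! i"
    proof (cases "i = a - 1")
      case True
      have lc: "length ?cols = M" by (simp add: colsW_def)
      then show ?thesis using True i a l r[of i] by (simp add: colW_Cons)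
    next
      case False
      then have "a \<noteq> Suc i" by auto
      then show ?thesis using i a l r[of i] False by (simp add: colW_Cons)
    qed
  qed
  have "add_in_col (Suc (a - 1)) d (tab ?cols) = tab (?cols[a - 1 := ?cols ! (a - 1) @ [d]])"
  proof (rule add_in_col_tab)
    show "a - 1 < length ?cols" using a by (simp add: colsW_def)
    show "sorted_wrt (\<lambda>x y. length y \<le> length x) ?cols"
      unfolding colsW_def sorted_wrt_map
      by (rule sorted_wrt_mono_rel[OF _ sorted_wrt_upt])
         (auto simp: colW_length intro: RL_anti[OF ru])
    show "\<forall>j<a - 1. length (?cols ! (a - 1)) < length (?cols ! j)"
    proof (intro allI impI)
      fix j assume j: "j < a - 1"
      have "count_list (a#u) a \<le> count_list (a#u) (a - 1)"
      proof -
        have "1 \<le> a - 1" using j by simp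
        then have "count_list (drop 0 (a#u)) (Suc (a - 1)) \<le> count_list (drop 0 (a#u)) (a - 1)"
          using Cons.prems(2) unfolding RL_def by blast
        moreover have "Suc (a - 1) = a" using a by simp
        ultimately show ?thesis by simp
      qed
      then have "Suc (count_list u a) \<le> count_list u (a - 1)" using j by (simp split: if_splits)
      moreover have "count_list u (a - 1) \<le> count_list u (Suc j)"
        using RL_anti[OF ru, of "Suc j" "a - 1"] j by simp
      ultimately show "length (?cols ! (a - 1)) < length (?cols ! j)"
        using len j a by simp
    qed
  qed
  then show ?case using ih upd a by simp
qed




context
  fixes w :: "nat list" and M :: nat
begin

definition Lw :: "nat list" where
  "Lw = concat (map (\<lambda>c. filter (\<lambda>p. w!p = c) [0..<length w]) [1..<Suc M])"

definition Rk :: "nat \<Rightarrow> nat \<Rightarrow> bool" where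
  "Rk q p \<longleftrightarrow> w!q < w!p \<or> (w!q = w!p \<and> q < p)"

lemma Lw_sorted_aux: "sorted_wrt Rk (concat (map (\<lambda>c. filter (\<lambda>p. w!p = c) [0..<length w]) [1..<Suc m]))"
proof (induction m)
  case 0 then show ?case by simp
next
  case (Suc m)
  have s1: "sorted_wrt Rk (filter (\<lambda>p. w!p = Suc m) [0..<length w])"
    by (rule sorted_wrt_mono_rel[OF _ sorted_wrt_filter[OF sorted_wrt_upt]]) (auto simp: Rk_def)
  show ?case using Suc.IH s1 unfolding Rk_def by (auto simp: sorted_wrt_append)
qed

lemma Lw_sorted: "sorted_wrt Rk Lw"
  using Lw_sorted_aux[of M] by (simp add: Lw_def)

lemma sorted_wrt_irrefl_distinct: "sorted_wrt R xs \<Longrightarrow> (\<And>x. \<not> R x x) \<Longrightarrow> distinct xs"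
  by (induction xs) auto

lemma Lw_distinct: "distinct Lw"
  using sorted_wrt_irrefl_distinct[OF Lw_sorted] by (auto simp: Rk_def)

lemma Lw_set: assumes lw: "\<forall>a\<in>set w. 1 \<le> a \<and> a \<le> M" shows "set Lw = {..<length w}"
proof (rule set_eqI)
  fix x
  show "x \<in> set Lw \<longleftrightarrow> x \<in> {..<length w}"
  proof
    assume "x \<in> set Lw" then show "x \<in> {..<length w}" by (auto simp: Lw_def simp del: upt_Suc)
  next
    assume x: "x \<in> {..<length w}"
    then have "1 \<le> w!x \<and> w!x \<le> M" using lw nth_mem by auto
    then show "x \<in> set Lw" using x unfolding Lw_def set_concat by (auto simp del: upt_Suc)
  qed
qed
lemma Lw_length: "\<forall>a\<in>set w. 1 \<le> a \<and> a \<le> M \<Longrightarrow> length Lw = length w"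
  using distinct_card[OF Lw_distinct] Lw_set by simp

lemma std_Lw:
  assumes lw: "\<forall>a\<in>set w. 1 \<le> a \<and> a \<le> M" and i: "i < length w"
  shows "std w ! (Lw ! i) = Suc i"
proof -
  have len: "length Lw = length w" using Lw_length lw .
  have st: "set Lw = {..<length w}" using Lw_set lw .
  have pl: "Lw ! i < length w" using st len i nth_mem by fastforce
  have eq: "{q. q < length w \<and> (w ! q < w ! (Lw!i) \<or> (w ! q = w ! (Lw!i) \<and> q < Lw!i))} = set (take i Lw)"
  proof
    show "set (take i Lw) \<subseteq> {q. q < length w \<and> (w ! q < w ! (Lw!i) \<or> (w ! q = w ! (Lw!i) \<and> q < Lw!i))}"
    proof
      fix x assume "x \<in> set (take i Lw)"
      then obtain j where j: "j < i" "x = Lw ! j" using i len by (auto simp: in_set_conv_nth)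
      then have "Rk (Lw!j) (Lw!i)" using sorted_wrt_nth_less[OF Lw_sorted] i len by simp
      moreover have "x < length w" using j st len i nth_mem by fastforce
      ultimately show "x \<in> {q. q < length w \<and> (w ! q < w ! (Lw!i) \<or> (w ! q = w ! (Lw!i) \<and> q < Lw!i))}"
        using j by (simp add: Rk_def)
    qed
  next
    show "{q. q < length w \<and> (w ! q < w ! (Lw!i) \<or> (w ! q = w ! (Lw!i) \<and> q < Lw!i))} \<subseteq> set (take i Lw)"
    proof
      fix q assume q: "q \<in> {q. q < length w \<and> (w ! q < w ! (Lw!i) \<or> (w ! q = w ! (Lw!i) \<and> q < Lw!i))}"
      then have "q \<in> set Lw" using st by auto
      then obtain j where j: "j < length Lw" "q = Lw ! j" by (auto simp: in_set_conv_nth)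
      have "j < i"
      proof (rule ccontr)
        assume "\<not> j < i"
        then consider "j = i" | "i < j" by linarith
        then show False
        proof cases
          case 1 then show False using q j by auto
        next
          case 2
          then have "Rk (Lw!i) (Lw!j)" using sorted_wrt_nth_less[OF Lw_sorted] j by simp
          then show False using q j by (auto simp: Rk_def)
        qed
      qed
      then show "q \<in> set (take i Lw)" using j by (auto simp: in_set_conv_nth)
    qed
  qed
  have "card (set (take i Lw)) = i"
    using distinct_card[of "take i Lw"] Lw_distinct i len by simp
  then show ?thesis using eq pl by (simp add: std_def)
qed

lemma perm_inv_std:
  assumes lw: "\<forall>a\<in>set w. 1 \<le> a \<and> a \<le> M"
  shows "perm_inv (std w) = map Suc Lw"
proof (rule nth_equalityI)
  have len: "length Lw = length w" using Lw_length lw .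
  have st: "set Lw = {..<length w}" using Lw_set lw .
  have ls: "length (std w) = length w" by (simp add: std_def)
  show "length (perm_inv (std w)) = length (map Suc Lw)" using len ls by (simp add: perm_inv_def del: upt_Suc)
  fix i assume "i < length (perm_inv (std w))"
  then have i: "i < length w" using ls by (simp add: perm_inv_def del: upt_Suc)
  have "(THE p. p < length (std w) \<and> std w ! p = Suc i) = Lw ! i"
  proof (rule the_equality)
    show "Lw ! i < length (std w) \<and> std w ! (Lw ! i) = Suc i"
      using std_Lw[OF lw i] st len i ls nth_mem by fastforce
  next
    fix p assume p: "p < length (std w) \<and> std w ! p = Suc i"
    then have "p \<in> set Lw" using st ls by auto
    then obtain j where j: "j < length Lw" "p = Lw ! j" by (auto simp: in_set_conv_nth)
    then have "std w ! p = Suc j" using std_Lw[OF lw] len by simp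
    then show "p = Lw ! i" using p j by simp
  qed
  then show "perm_inv (std w) ! i = map Suc Lw ! i"
    using i len ls by (simp add: perm_inv_def del: upt_Suc)
qed

lemma concat_cols: "concat (map rev (colsW M 1 w)) = map Suc Lw"
  unfolding colsW_def Lw_def map_concat map_map
  by (rule arg_cong[where f=concat], rule map_cong) (simp_all add: colW_def)
end

lemma count_drop_card:
  "count_list (drop q w) x = card {p. q \<le> p \<and> p < length w \<and> w!p = x}"
proof -
  have "count_list (drop q w) x = card {i. i < length w - q \<and> x = w ! (q + i)}"
    by (auto simp: count_list_eq_length_filter length_filter_conv_card nth_drop intro!: arg_cong[where f=card])
  also have "\<dots> = card ((\<lambda>i. i + q) ` {i. i < length w - q \<and> x = w ! (q + i)})"
    by (simp add: card_image inj_on_def)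
  also have "(\<lambda>i. i + q) ` {i. i < length w - q \<and> x = w ! (q + i)} = {p. q \<le> p \<and> p < length w \<and> w!p = x}"
  proof (rule set_eqI, rule iffI)
    fix p assume "p \<in> (\<lambda>i. i + q) ` {i. i < length w - q \<and> x = w ! (q + i)}"
    then show "p \<in> {p. q \<le> p \<and> p < length w \<and> w!p = x}" by (auto simp: add.commute)
  next
    fix p assume "p \<in> {p. q \<le> p \<and> p < length w \<and> w!p = x}"
    then show "p \<in> (\<lambda>i. i + q) ` {i. i < length w - q \<and> x = w ! (q + i)}"
      by (auto intro!: image_eqI[of _ _ "p - q"])
  qed
  finally show ?thesis .
qed

lemma RL_drop: assumes "RL w" shows "RL (drop q w)"
  unfolding RL_def
proof (intro allI impI)
  fix k j :: nat assume k: "k \<le> length (drop q w)" and j: "1 \<le> j"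
  show "count_list (drop k (drop q w)) (Suc j) \<le> count_list (drop k (drop q w)) j"
  proof (cases "q \<le> length w")
    case True
    then have "k + q \<le> length w" using k by simp
    then have "count_list (drop (k + q) w) (Suc j) \<le> count_list (drop (k + q) w) j"
      using assms j unfolding RL_def by blast
    then show ?thesis by simp
  next
    case False then show ?thesis by simp
  qed
qed

definition Dw :: "nat list \<Rightarrow> nat \<Rightarrow> nat list" where
  "Dw w c = rev (filter (\<lambda>p. w!p = c) [0..<length w])"

lemma Dw_sorted: "sorted_wrt (>) (Dw w c)"
  unfolding Dw_def sorted_wrt_rev by (rule sorted_wrt_filter[OF sorted_wrt_upt])

lemma Dw_distinct: "distinct (Dw w c)" by (simp add: Dw_def)

lemma cross:
  assumes rl: "RL w" and c: "1 \<le> c" "c < c'"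
    and i: "i < length (Dw w c)" "i < length (Dw w c')"
  shows "Dw w c' ! i < Dw w c ! i"
proof (rule ccontr)
  assume na: "\<not> Dw w c' ! i < Dw w c ! i"
  define q where "q = Dw w c' ! i"
  have qin: "q \<in> set (Dw w c')" using i q_def by simp
  then have qw: "q < length w" "w ! q = c'" by (auto simp: Dw_def)
  let ?S' = "{p. q \<le> p \<and> p < length w \<and> w!p = c'}"
  let ?S = "{p. q \<le> p \<and> p < length w \<and> w!p = c}"
  have "set (take (Suc i) (Dw w c')) \<subseteq> ?S'"
  proof
    fix x assume "x \<in> set (take (Suc i) (Dw w c'))"
    then obtain j where j: "j \<le> i" "x = Dw w c' ! j" using i by (auto simp: in_set_conv_nth less_Suc_eq_le)
    have "q \<le> x"
    proof (cases "j = i")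
      case True then show ?thesis using j q_def by simp
    next
      case False then show ?thesis using sorted_wrt_nth_less[OF Dw_sorted, of j i w c'] j i q_def by simp
    qed
    moreover have "x \<in> set (Dw w c')" using j i by simp
    ultimately show "x \<in> ?S'" by (auto simp: Dw_def)
  qed
  then have "card (set (take (Suc i) (Dw w c'))) \<le> card ?S'" by (rule card_mono[rotated]) auto
  moreover have "card (set (take (Suc i) (Dw w c'))) = Suc i"
    using distinct_card[of "take (Suc i) (Dw w c')"] Dw_distinct i by simp
  ultimately have c1: "Suc i \<le> card ?S'" by simp
  have "count_list (drop q w) c' \<le> count_list (drop q w) c"
    using RL_anti[OF RL_drop[OF rl] c(1)] c by simp
  then have c2: "Suc i \<le> card ?S" using c1 by (simp add: count_drop_card)
  have "?S \<subseteq> set (take i (Dw w c))"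
  proof
    fix p assume p: "p \<in> ?S"
    then have "p \<in> set (Dw w c)" by (auto simp: Dw_def)
    then obtain j where j: "j < length (Dw w c)" "p = Dw w c ! j" by (auto simp: in_set_conv_nth)
    have "j < i"
    proof (rule ccontr)
      assume "\<not> j < i"
      then have "Dw w c ! j \<le> Dw w c ! i"
        using sorted_wrt_nth_less[OF Dw_sorted, of i j w c] j by (cases "i = j") auto
      then have "p \<le> q" using na j q_def by simp
      then have "p = q" using p by simp
      then show False using p qw c by simp
    qed
    then show "p \<in> set (take i (Dw w c))" using j by (auto simp: in_set_conv_nth)
  qed
  then have "card ?S \<le> card (set (take i (Dw w c)))" by (rule card_mono[rotated]) auto
  also have "\<dots> \<le> i" using card_length[of "take i (Dw w c)"] by simp
  finally show False using c2 by linarith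
qed

lemma colW_Dw: "colW 1 w c = map Suc (Dw w c)"
  by (simp add: colW_def Dw_def rev_map)

lemma Cond_cols: "RL w \<Longrightarrow> Cond (colsW M 1 w)"
  unfolding Cond_def
proof (intro conjI)
  show "\<forall>c\<in>set (colsW M 1 w). sorted_wrt (>) c"
    using Dw_sorted unfolding colsW_def colW_Dw by (auto simp: sorted_wrt_map simp del: upt_Suc)
  assume rl: "RL w"
  show "sorted_wrt (\<lambda>a b. \<forall>i. i < length a \<longrightarrow> i < length b \<longrightarrow> b!i < a!i) (colsW M 1 w)"
    unfolding colsW_def sorted_wrt_map colW_Dw
    by (rule sorted_wrt_mono_rel[OF _ sorted_wrt_upt]) (auto intro!: cross[OF rl] simp del: upt_Suc)
qed

theorem corollary8p3:
  fixes w :: "nat list"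
  assumes "\<forall>i \<in> set w. 1 \<le> i"
    and "reverse_lattice w"
  shows "T_of_word w = P_tab (perm_inv (std w))"
proof -
  define M where "M = sum_list w"
  have lw: "\<forall>a\<in>set w. 1 \<le> a \<and> a \<le> M" using assms(1) by (auto simp: M_def member_le_sum_list)
  have rl: "RL w" unfolding RL_def
  proof (intro allI impI)
    fix k j :: nat assume k: "k \<le> length w" and j: "1 \<le> j"
    have "length w - k \<le> length w" by simp
    then have "count_list (drop (length w - (length w - k)) w) (Suc j) \<le> count_list (drop (length w - (length w - k)) w) j"
      using assms(2) j unfolding reverse_lattice_def by blast
    moreover have "length w - (length w - k) = k" using k by simp
    ultimately show "count_list (drop k w) (Suc j) \<le> count_list (drop k w) j" by simp
  qed
  have "T_of_word w = tab (colsW M 1 w)"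
    using T_of_word_Tw T_side[OF lw rl] by simp
  also have "\<dots> = P_tab (concat (map rev (colsW M 1 w)))"
    using P_side[OF Cond_cols[OF rl]] by (simp add: P_tab_def)
  also have "concat (map rev (colsW M 1 w)) = perm_inv (std w)"
    using concat_cols perm_inv_std[OF lw] by simp
  finally show ?thesis .
qed


end
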